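(* Let $p_1,\dots,p_m\in[0,1]$ and let $(\ell_{i:n})_{0\le i\le n\le m}$ be reals with $\ell_{0:n}=-1$ for all $n$, such that $n\mapsto\ell_{i:n}$ is nonincreasing and $i\mapsto\ell_{i:n}$ is nondecreasing. For $A\subseteq\{1,\dots,m\}$ and $t\in[0,1]$ set $\varphi_{A,t}=\mathbf 1\{t\le\ell_{i_A(t):|A|}\}$. Then for all $S\subseteq\{1,\dots,m\}$, $n\in\{0,\dots,|S|\}$, $t\in[0,1]$, $$\varphi_{S,n,t}=\min_{0\le k\le i_{S^c}(t)}\mathbf 1\Big\{t\le\ell_{\left((n+i_S(t)-|S|)\vee0+k\right):\left(n+m-|S|-i_{S^c}(t)+k\right)}\Big\}.$$ In particular $\varphi_{\{1,\dots,m\},n,t}=\mathbf 1\{t\le\ell_{((n+i(t)-m)\vee 0):n}\}$.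
   Context: $i_A(t)=\sum_{j\in A}\mathbf 1\{p_j\le t\}$, $i(t)=i_{\{1,\dots,m\}}(t)$, $S^c=\{1,\dots,m\}\setminus S$. $\varphi_{S,n,t}=\min\{\varphi_{A,t}: A\subseteq\{1,\dots,m\},\ |A\cap S|=n\}$. *)

theory Defs
  imports Complex_Main
begin

definition cnt :: "(nat \<Rightarrow> real) \<Rightarrow> nat set \<Rightarrow> real \<Rightarrow> nat" where
  "cnt p A t = card {j \<in> A. p j \<le> t}"

definition phiA :: "(nat \<Rightarrow> real) \<Rightarrow> (nat \<Rightarrow> nat \<Rightarrow> real) \<Rightarrow> nat set \<Rightarrow> real \<Rightarrow> nat" where
  "phiA p l A t = (if t \<le> l (cnt p A t) (card A) then 1 else 0)"

definition phiSn :: "nat \<Rightarrow> (nat \<Rightarrow> real) \<Rightarrow> (nat \<Rightarrow> nat \<Rightarrow> real) \<Rightarrow> nat set \<Rightarrow> nat \<Rightarrow> real \<Rightarrow> nat" where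
  "phiSn m p l S n t = Min {phiA p l A t | A. A \<subseteq> {1..m} \<and> card (A \<inter> S) = n}"

end

theory Submission imports Defs begin

lemma min01: "X \<subseteq> {0,1::nat} \<Longrightarrow> X \<noteq> {} \<Longrightarrow> Min X = (if 0 \<in> X then 0 else 1)"
proof -
  assume a: "X \<subseteq> {0,1::nat}" "X \<noteq> {}"
  have f: "finite X" using a finite_subset by blast
  show ?thesis
  proof (cases "0 \<in> X")
    case True thus ?thesis using f by (metis Min_le le_zero_eq)
  next
    case False then have "X = {1}" using a by blast
    thus ?thesis by simp
  qed
qed

lemma part1:
  fixes m :: nat and p :: "nat \<Rightarrow> real" and l :: "nat \<Rightarrow> nat \<Rightarrow> real"
  assumes mono_n: "\<And>i n n'. i \<le> n \<Longrightarrow> n \<le> n' \<Longrightarrow> n' \<le> m \<Longrightarrow> l i n' \<le> l i n"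
    and mono_i: "\<And>i i' n. i \<le> i' \<Longrightarrow> i' \<le> n \<Longrightarrow> n \<le> m \<Longrightarrow> l i n \<le> l i' n"
    and SS: "S \<subseteq> {1..m}" and nS: "n \<le> card S"
  shows "phiSn m p l S n t =
            Min ((\<lambda>k. if t \<le> l (nat (int n + int (cnt p S t) - int (card S)) + k)
                                 (n + m - card S - cnt p ({1..m} - S) t + k) then 1 else 0)
                 ` {0..cnt p ({1..m} - S) t})"
proof -
  define P where "P = {j. p j \<le> t}"
  define S1 where "S1 = S \<inter> P"
  define S0 where "S0 = S - P"
  define C1 where "C1 = ({1..m} - S) \<inter> P"
  define C0 where "C0 = ({1..m} - S) - P"
  have finS: "finite S" using SS finite_subset by blast
  have cS: "card S = card S1 + card S0" unfolding S1_def S0_def by (rule card_Int_Diff[OF finS])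
  have cC0: "card ({1..m} - S) = card C1 + card C0" unfolding C1_def C0_def by (rule card_Int_Diff) simp
  have cm: "card ({1..m} - S) = m - card S" using SS finS by (simp add: card_Diff_subset)
  have sm: "card S \<le> m" using SS card_mono[of "{1..m}" S] by simp
  have "{j \<in> S. p j \<le> t} = S1" unfolding S1_def P_def by blast
  then have cntS: "cnt p S t = card S1" unfolding cnt_def by simp
  have "{j \<in> {1..m} - S. p j \<le> t} = C1" unfolding C1_def P_def by blast
  then have cntC: "cnt p ({1..m} - S) t = card C1" unfolding cnt_def by simp
  define d0 where "d0 = n + card S1 - card S"
  define N where "N k = n + m - card S - card C1 + k" for k
  have d0eq: "nat (int n + int (cnt p S t) - int (card S)) = d0"
    unfolding d0_def cntS by linarith
  define F where "F = {phiA p l A t | A. A \<subseteq> {1..m} \<and> card (A \<inter> S) = n}"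
  define G where "G = (\<lambda>k. if t \<le> l (d0 + k) (N k) then 1 else (0::nat)) ` {0..card C1}"
  have lhs: "phiSn m p l S n t = Min F" unfolding phiSn_def F_def by simp
  have rhs: "Min ((\<lambda>k. if t \<le> l (nat (int n + int (cnt p S t) - int (card S)) + k)
                                 (n + m - card S - cnt p ({1..m} - S) t + k) then 1 else 0)
                 ` {0..cnt p ({1..m} - S) t}) = Min G"
    unfolding G_def d0eq cntC N_def by (rule refl)
  have constr: "\<exists>A. A \<subseteq> {1..m} \<and> card (A \<inter> S) = n \<and> cnt p A t = d0 + k \<and> card A = N k"
    if k: "k \<le> card C1" for k
  proof -
    have "d0 \<le> card S1" unfolding d0_def using nS cS by linarith
    then obtain B1 where B1: "B1 \<subseteq> S1" "card B1 = d0" "finite B1" by (rule obtain_subset_with_card_n)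
    have "n - d0 \<le> card S0" unfolding d0_def using nS cS by linarith
    then obtain B0 where B0: "B0 \<subseteq> S0" "card B0 = n - d0" "finite B0" by (rule obtain_subset_with_card_n)
    obtain K where K: "K \<subseteq> C1" "card K = k" "finite K" using k by (rule obtain_subset_with_card_n)
    define A where "A = B1 \<union> B0 \<union> K \<union> C0"
    have fC0: "finite C0" unfolding C0_def by simp
    have AS: "A \<inter> S = B1 \<union> B0" unfolding A_def using B1 B0 K unfolding S1_def S0_def C1_def C0_def by blast
    have AP: "{j \<in> A. p j \<le> t} = B1 \<union> K" unfolding A_def using B1 B0 K unfolding S1_def S0_def C1_def C0_def P_def by blast
    have d1: "B1 \<inter> B0 = {}" using B1 B0 unfolding S1_def S0_def by blast
    have d2: "B1 \<inter> K = {}" using B1 K unfolding S1_def C1_def by blast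
    have d3: "(B1 \<union> B0) \<inter> K = {}" using B1 B0 K unfolding S1_def S0_def C1_def by blast
    have d4: "(B1 \<union> B0 \<union> K) \<inter> C0 = {}" using B1 B0 K unfolding S1_def S0_def C1_def C0_def by blast
    have "d0 \<le> n" unfolding d0_def using cS by linarith
    have c1: "card (A \<inter> S) = n" unfolding AS using card_Un_disjoint[OF B1(3) B0(3) d1] B1 B0 \<open>d0 \<le> n\<close> by simp
    have c2: "cnt p A t = d0 + k" unfolding cnt_def AP using card_Un_disjoint[OF B1(3) K(3) d2] B1 K by simp
    have "card A = card (B1 \<union> B0 \<union> K) + card C0" unfolding A_def
      using card_Un_disjoint[OF _ fC0 d4] B1 B0 K by simp
    also have "\<dots> = card (B1 \<union> B0) + k + card C0"
      using card_Un_disjoint[OF _ K(3) d3] B1 B0 K by simp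
    also have "\<dots> = N k"
    proof -
      have cB: "card (B1 \<union> B0) = n" using c1 AS by simp
      show ?thesis using cB cC0 cm sm unfolding N_def by linarith
    qed
    finally have c3: "card A = N k" .
    have "A \<subseteq> {1..m}" unfolding A_def using B1 B0 K SS unfolding S1_def S0_def C1_def C0_def by blast
    thus ?thesis using c1 c2 c3 by blast
  qed
  have F01: "F \<subseteq> {0,1}" unfolding F_def phiA_def by auto
  have G01: "G \<subseteq> {0,1}" unfolding G_def by auto
  have Gne: "G \<noteq> {}" unfolding G_def image_is_empty by simp
  have Fne: "F \<noteq> {}"
  proof -
    obtain A where A: "A \<subseteq> {1..m}" "card (A \<inter> S) = n" using constr[of 0] by blast
    have "phiA p l A t \<in> F" unfolding F_def by (rule CollectI, rule exI[of _ A], intro conjI refl A(1) A(2))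
    thus ?thesis by blast
  qed
  have FG: "0 \<in> G" if "0 \<in> F"
  proof -
    have "\<exists>A. 0 = phiA p l A t \<and> A \<subseteq> {1..m} \<and> card (A \<inter> S) = n"
      using that unfolding F_def by (simp only: mem_Collect_eq)
    then obtain A where A0: "A \<subseteq> {1..m}" "card (A \<inter> S) = n" "phiA p l A t = 0"
      by (elim exE conjE) simp
    have "\<not> t \<le> l (cnt p A t) (card A)" using A0(3) unfolding phiA_def by (simp split: if_splits)
    note A = A0(1,2) this
    have fA: "finite A" by (rule finite_subset[OF A(1)]) simp
    define a1 where "a1 = card (A \<inter> S1)"
    define a0 where "a0 = card (A \<inter> S0)"
    define b1 where "b1 = card (A \<inter> C1)"
    define b0 where "b0 = card (A \<inter> C0)"
    have e1a: "card (A \<inter> S) = card (A \<inter> S \<inter> P) + card (A \<inter> S - P)" by (rule card_Int_Diff) (simp add: fA)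
    have e1b: "A \<inter> S \<inter> P = A \<inter> S1" unfolding S1_def by blast
    have e1c: "A \<inter> S - P = A \<inter> S0" unfolding S0_def by blast
    have e1: "n = a1 + a0" unfolding a1_def a0_def using e1a e1b e1c A(2) by simp
    have AmS: "A - S = A \<inter> ({1..m} - S)" using A(1) by blast
    have e2a: "card (A - S) = card ((A - S) \<inter> P) + card ((A - S) - P)" by (rule card_Int_Diff) (simp add: fA)
    have e2b: "(A - S) \<inter> P = A \<inter> C1" unfolding C1_def using A(1) by blast
    have e2c: "(A - S) - P = A \<inter> C0" unfolding C0_def using A(1) by blast
    have e2: "card (A - S) = b1 + b0" unfolding b1_def b0_def using e2a e2b e2c by simp
    have e3: "card A = n + card (A - S)" using card_Int_Diff[OF fA, of S] A(2) by simp
    have "{j \<in> A. p j \<le> t} = A \<inter> P" unfolding P_def by blast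
    then have "cnt p A t = card (A \<inter> P)" unfolding cnt_def by simp
    also have "\<dots> = card (A \<inter> P \<inter> S) + card (A \<inter> P - S)" by (rule card_Int_Diff) (simp add: fA)
    also have "A \<inter> P \<inter> S = A \<inter> S1" unfolding S1_def by blast
    also have "A \<inter> P - S = A \<inter> C1" unfolding C1_def using A(1) by blast
    finally have e4: "cnt p A t = a1 + b1" unfolding a1_def b1_def .
    have f0: "finite S0" "finite C1" "finite C0" unfolding S0_def C1_def C0_def using finS by auto
    have "a0 \<le> card S0" unfolding a0_def by (rule card_mono[OF f0(1)]) blast
    have "b1 \<le> card C1" unfolding b1_def by (rule card_mono[OF f0(2)]) blast
    have "b0 \<le> card C0" unfolding b0_def by (rule card_mono[OF f0(3)]) blast
    have i1: "d0 + b1 \<le> a1 + b1" unfolding d0_def using e1 cS \<open>a0 \<le> card S0\<close> by linarith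
    have NB: "N b1 = n + card C0 + b1"
    proof -
      have q1: "m - card S = card C1 + card C0" using cC0 cm by simp
      have q2: "n + m - card S = n + (m - card S)" using sm by simp
      have q3: "n + m - card S - card C1 = n + card C0" unfolding q2 q1 by simp
      show ?thesis unfolding N_def q3 ..
    qed
    have i2: "a1 + b1 \<le> N b1" using NB e1 by linarith
    have i3: "N b1 \<le> m" using NB cC0 cm sm nS \<open>b1 \<le> card C1\<close> by linarith
    have i4: "a1 + b1 \<le> card A" using e3 e2 e1 by linarith
    have i5: "card A \<le> N b1" using e3 e2 NB \<open>b0 \<le> card C0\<close> by linarith
    have "l (d0 + b1) (N b1) \<le> l (a1 + b1) (N b1)" by (rule mono_i[OF i1 i2 i3])
    also have "\<dots> \<le> l (a1 + b1) (card A)" by (rule mono_n[OF i4 i5 i3])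
    finally have lle: "l (d0 + b1) (N b1) \<le> l (a1 + b1) (card A)" .
    have "\<not> t \<le> l (a1 + b1) (card A)" using A(3) unfolding e4 .
    then have "\<not> t \<le> l (d0 + b1) (N b1)" using lle by linarith
    then have b0e: "0 = (\<lambda>k. if t \<le> l (d0 + k) (N k) then 1 else (0::nat)) b1" by simp
    have bmem: "b1 \<in> {0..card C1}" using \<open>b1 \<le> card C1\<close> by simp
    show ?thesis unfolding G_def by (rule image_eqI[where f="\<lambda>k. if t \<le> l (d0 + k) (N k) then 1 else (0::nat)", OF b0e bmem])
  qed
  have GF: "0 \<in> F" if "0 \<in> G"
  proof -
    from that[unfolded G_def] obtain k where k0: "0 = (if t \<le> l (d0 + k) (N k) then 1 else (0::nat))" "k \<in> {0..card C1}"
      by (rule imageE)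
    have k: "k \<le> card C1" "\<not> t \<le> l (d0 + k) (N k)" using k0 by (simp_all split: if_splits)
    obtain A where A: "A \<subseteq> {1..m}" "card (A \<inter> S) = n" "cnt p A t = d0 + k" "card A = N k"
      using constr[OF k(1)] by blast
    have z: "phiA p l A t = 0" unfolding phiA_def using k(2) A(3,4) by simp
    have "phiA p l A t \<in> F" unfolding F_def by (rule CollectI, rule exI[of _ A], intro conjI refl A(1) A(2))
    then show ?thesis using z by simp
  qed
  show ?thesis unfolding lhs rhs using min01[OF F01 Fne] min01[OF G01 Gne] FG GF by simp
qed

theorem mainTheorem7:
  fixes m :: nat and p :: "nat \<Rightarrow> real" and l :: "nat \<Rightarrow> nat \<Rightarrow> real"
  assumes p01: "\<And>j. j \<in> {1..m} \<Longrightarrow> 0 \<le> p j \<and> p j \<le> 1"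
    and l0: "\<And>n. n \<le> m \<Longrightarrow> l 0 n = -1"
    and mono_n: "\<And>i n n'. i \<le> n \<Longrightarrow> n \<le> n' \<Longrightarrow> n' \<le> m \<Longrightarrow> l i n' \<le> l i n"
    and mono_i: "\<And>i i' n. i \<le> i' \<Longrightarrow> i' \<le> n \<Longrightarrow> n \<le> m \<Longrightarrow> l i n \<le> l i' n"
  shows "(\<forall>S n t. S \<subseteq> {1..m} \<longrightarrow> n \<le> card S \<longrightarrow> 0 \<le> t \<longrightarrow> t \<le> 1 \<longrightarrow>
            phiSn m p l S n t =
            Min ((\<lambda>k. if t \<le> l (nat (int n + int (cnt p S t) - int (card S)) + k)
                                 (n + m - card S - cnt p ({1..m} - S) t + k) then 1 else 0)
                 ` {0..cnt p ({1..m} - S) t}))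
       \<and> (\<forall>n t. n \<le> m \<longrightarrow> 0 \<le> t \<longrightarrow> t \<le> 1 \<longrightarrow>
            phiSn m p l {1..m} n t =
            (if t \<le> l (nat (int n + int (cnt p {1..m} t) - int m)) n then 1 else 0))"
proof (intro conjI allI impI)
  fix S n and t :: real assume SS: "S \<subseteq> {1..m}" and nS: "n \<le> card S" and "0 \<le> t" "t \<le> 1"
  show "phiSn m p l S n t =
            Min ((\<lambda>k. if t \<le> l (nat (int n + int (cnt p S t) - int (card S)) + k)
                                 (n + m - card S - cnt p ({1..m} - S) t + k) then 1 else 0)
                 ` {0..cnt p ({1..m} - S) t})" by (rule part1[OF mono_n mono_i SS nS])
next
  fix n and t :: real assume n: "n \<le> m" and "0 \<le> t" "t \<le> 1"
  have "phiSn m p l {1..m} n t =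
            Min ((\<lambda>k. if t \<le> l (nat (int n + int (cnt p {1..m} t) - int (card {1..m})) + k)
                                 (n + m - card {1..m} - cnt p ({1..m} - {1..m}) t + k) then 1 else 0)
                 ` {0..cnt p ({1..m} - {1..m}) t})" proof (rule part1[OF mono_n mono_i subset_refl])
    have "card {1..m} = m" by simp
    then show "n \<le> card {1..m}" using n by linarith
  qed
  also have "\<dots> = (if t \<le> l (nat (int n + int (cnt p {1..m} t) - int m)) n then 1 else 0)"
  proof -
    have c0: "cnt p ({1..m} - {1..m}) t = 0" by (simp add: cnt_def)
    have cm: "card {1..m} = m" by simp
    have e: "n + m - card {1..m} - 0 + 0 = n" unfolding cm by simp
    have z: "{0..0::nat} = {0}" by simp
    show ?thesis unfolding c0 e z cm by simp
  qed
  finally show "phiSn m p l {1..m} n t = (if t \<le> l (nat (int n + int (cnt p {1..m} t) - int m)) n then 1 else 0)" .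
qed

end
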